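(* Let $H$ be a Hopf algebra and $K$ a locally affine Hopf subalgebra of $H$. If $H$ is generated as an algebra by $K$ and a single element $x\in H$, then $H$ is locally affine.
   Context: A Hopf algebra is locally affine if every finite subset of it is contained in a Hopf subalgebra that is finitely generated as an algebra. The base field $k$ is algebraically closed of characteristic zero. *)

theory Defs
  imports Main "HOL-Computational_Algebra.Polynomial"
begin

text \<open>The Hopf algebra H is the whole carrier type 'h (a ring with 1),
  made into an algebra over the field 'k by a scalar multiplication sc.
  Elements of H (x) H are represented by finite lists of pairs (a_i, b_i),
  standing for sum a_i (x) b_i. Since k is a field, two such lists represent the
  same tensor iff they agree under all pairs of linear functionals (and similarly
  for triple tensors); all tensor identities are stated in this way.\<close>

definition alg_closed_field :: "'k::field itself \<Rightarrow> bool" where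
  "alg_closed_field _ \<longleftrightarrow> (\<forall>p::'k poly. degree p > 0 \<longrightarrow> (\<exists>z. poly p z = 0))"

definition functional :: "('k::field \<Rightarrow> 'h::ring_1 \<Rightarrow> 'h) \<Rightarrow> ('h \<Rightarrow> 'k) \<Rightarrow> bool" where
  "functional sc \<phi> \<longleftrightarrow> Vector_Spaces.linear sc (*) \<phi>"

definition tens_eval :: "('h \<Rightarrow> 'k::field) \<Rightarrow> ('h \<Rightarrow> 'k) \<Rightarrow> ('h \<times> 'h) list \<Rightarrow> 'k" where
  "tens_eval \<phi> \<psi> l = (\<Sum>(a,b)\<leftarrow>l. \<phi> a * \<psi> b)"

definition tens_eq :: "('k::field \<Rightarrow> 'h::ring_1 \<Rightarrow> 'h) \<Rightarrow> ('h \<times> 'h) list \<Rightarrow> ('h \<times> 'h) list \<Rightarrow> bool" where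
  "tens_eq sc l m \<longleftrightarrow> (\<forall>\<phi> \<psi>. functional sc \<phi> \<and> functional sc \<psi> \<longrightarrow> tens_eval \<phi> \<psi> l = tens_eval \<phi> \<psi> m)"

definition tens_mult :: "('h::ring_1 \<times> 'h) list \<Rightarrow> ('h \<times> 'h) list \<Rightarrow> ('h \<times> 'h) list" where
  "tens_mult l m = concat (map (\<lambda>(a1,b1). map (\<lambda>(a2,b2). (a1 * a2, b1 * b2)) m) l)"

definition k_algebra :: "('k::field \<Rightarrow> 'h::ring_1 \<Rightarrow> 'h) \<Rightarrow> bool" where
  "k_algebra sc \<longleftrightarrow> vector_space sc \<and>
     (\<forall>c a b. sc c (a * b) = sc c a * b \<and> sc c (a * b) = a * sc c b)"

definition hopf_algebra ::
  "('k::field \<Rightarrow> 'h::ring_1 \<Rightarrow> 'h) \<Rightarrow> ('h \<Rightarrow> ('h \<times> 'h) list) \<Rightarrow> ('h \<Rightarrow> 'k) \<Rightarrow> ('h \<Rightarrow> 'h) \<Rightarrow> bool" where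
  "hopf_algebra sc \<Delta> \<epsilon> S \<longleftrightarrow>
     k_algebra sc \<and>
     \<comment> \<open>comultiplication: linear algebra map\<close>
     (\<forall>a b. tens_eq sc (\<Delta> (a + b)) (\<Delta> a @ \<Delta> b)) \<and>
     (\<forall>c a. tens_eq sc (\<Delta> (sc c a)) (map (\<lambda>(u,v). (sc c u, v)) (\<Delta> a))) \<and>
     (\<forall>a b. tens_eq sc (\<Delta> (a * b)) (tens_mult (\<Delta> a) (\<Delta> b))) \<and>
     tens_eq sc (\<Delta> 1) [(1,1)] \<and>
     \<comment> \<open>coassociativity\<close>
     (\<forall>h \<phi> \<psi> \<chi>. functional sc \<phi> \<and> functional sc \<psi> \<and> functional sc \<chi> \<longrightarrow>
        (\<Sum>(a,b)\<leftarrow>\<Delta> h. (\<Sum>(c,d)\<leftarrow>\<Delta> a. \<phi> c * \<psi> d * \<chi> b)) =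
        (\<Sum>(a,b)\<leftarrow>\<Delta> h. (\<Sum>(c,d)\<leftarrow>\<Delta> b. \<phi> a * \<psi> c * \<chi> d))) \<and>
     \<comment> \<open>counit: linear algebra map satisfying the counit axioms\<close>
     functional sc \<epsilon> \<and> (\<forall>a b. \<epsilon> (a * b) = \<epsilon> a * \<epsilon> b) \<and> \<epsilon> 1 = 1 \<and>
     (\<forall>h. (\<Sum>(a,b)\<leftarrow>\<Delta> h. sc (\<epsilon> a) b) = h \<and> (\<Sum>(a,b)\<leftarrow>\<Delta> h. sc (\<epsilon> b) a) = h) \<and>
     \<comment> \<open>antipode\<close>
     module_hom sc sc S \<and>
     (\<forall>h. (\<Sum>(a,b)\<leftarrow>\<Delta> h. S a * b) = sc (\<epsilon> h) 1 \<and> (\<Sum>(a,b)\<leftarrow>\<Delta> h. a * S b) = sc (\<epsilon> h) 1)"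

definition subalgebra :: "('k::field \<Rightarrow> 'h::ring_1 \<Rightarrow> 'h) \<Rightarrow> 'h set \<Rightarrow> bool" where
  "subalgebra sc A \<longleftrightarrow> module.subspace sc A \<and> 1 \<in> A \<and> (\<forall>a\<in>A. \<forall>b\<in>A. a * b \<in> A)"

definition hopf_subalgebra ::
  "('k::field \<Rightarrow> 'h::ring_1 \<Rightarrow> 'h) \<Rightarrow> ('h \<Rightarrow> ('h \<times> 'h) list) \<Rightarrow> ('h \<Rightarrow> 'h) \<Rightarrow> 'h set \<Rightarrow> bool" where
  "hopf_subalgebra sc \<Delta> S A \<longleftrightarrow> subalgebra sc A \<and>
     (\<forall>h\<in>A. \<exists>l. (\<forall>(a,b)\<in>set l. a \<in> A \<and> b \<in> A) \<and> tens_eq sc (\<Delta> h) l) \<and>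
     (\<forall>h\<in>A. S h \<in> A)"

definition alg_gen :: "('k::field \<Rightarrow> 'h::ring_1 \<Rightarrow> 'h) \<Rightarrow> 'h set \<Rightarrow> 'h set" where
  "alg_gen sc X = \<Inter>{A. subalgebra sc A \<and> X \<subseteq> A}"

definition finitely_generated :: "('k::field \<Rightarrow> 'h::ring_1 \<Rightarrow> 'h) \<Rightarrow> 'h set \<Rightarrow> bool" where
  "finitely_generated sc A \<longleftrightarrow> (\<exists>X. finite X \<and> alg_gen sc X = A)"

definition locally_affine ::
  "('k::field \<Rightarrow> 'h::ring_1 \<Rightarrow> 'h) \<Rightarrow> ('h \<Rightarrow> ('h \<times> 'h) list) \<Rightarrow> ('h \<Rightarrow> 'h) \<Rightarrow> 'h set \<Rightarrow> bool" where
  "locally_affine sc \<Delta> S K \<longleftrightarrow>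
     (\<forall>F. finite F \<and> F \<subseteq> K \<longrightarrow>
        (\<exists>A. hopf_subalgebra sc \<Delta> S A \<and> A \<subseteq> K \<and> F \<subseteq> A \<and> finitely_generated sc A))"

end

theory Submission
  imports Defs
begin

definition lin :: "('k::field \<Rightarrow> 'h::ring_1 \<Rightarrow> 'h) \<Rightarrow> ('h \<Rightarrow> 'h) \<Rightarrow> bool" where
 "lin sc f \<longleftrightarrow> (\<forall>a b. f (a+b) = f a + f b) \<and> (\<forall>c a. f (sc c a) = sc c (f a))"

lemma vs_field: "vector_space ((*) :: 'k::field \<Rightarrow> 'k \<Rightarrow> 'k)"
  by (simp add: vector_space_def algebra_simps)

lemma functional_iff: fixes sc :: "'k::field \<Rightarrow> 'h::ring_1 \<Rightarrow> 'h"
  shows "vector_space sc \<Longrightarrow> functional sc \<phi> \<longleftrightarrow>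
   (\<forall>a b. \<phi> (a+b) = \<phi> a + \<phi> b) \<and> (\<forall>c a. \<phi> (sc c a) = c * \<phi> a)"
proof -
  assume "vector_space sc"
  moreover have "vector_space ((*) :: 'k \<Rightarrow> 'k \<Rightarrow> 'k)" by (rule vs_field)
  ultimately show ?thesis
    unfolding functional_def module_hom_iff_linear[symmetric] module_hom_iff module_iff_vector_space
    by blast
qed

definition bilin :: "('k::field \<Rightarrow> 'h::ring_1 \<Rightarrow> 'h) \<Rightarrow> ('h \<Rightarrow> 'h \<Rightarrow> 'h) \<Rightarrow> bool" where
 "bilin sc F \<longleftrightarrow> (\<forall>u. lin sc (F u)) \<and> (\<forall>v. lin sc (\<lambda>u. F u v))"

definition tril :: "('k::field \<Rightarrow> 'h::ring_1 \<Rightarrow> 'h) \<Rightarrow> ('h \<Rightarrow> 'h \<Rightarrow> 'h \<Rightarrow> 'h) \<Rightarrow> bool" where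
 "tril sc T \<longleftrightarrow> (\<forall>a b. lin sc (T a b)) \<and> (\<forall>a c. lin sc (\<lambda>b. T a b c)) \<and> (\<forall>b c. lin sc (\<lambda>a. T a b c))"

lemma sum_list_concat_map: "(\<Sum>x\<leftarrow>concat xs. f x) = (\<Sum>ys\<leftarrow>xs. \<Sum>x\<leftarrow>ys. f x)"
  by (induction xs) auto

lemma lm_l: "(c::'a::ring) * (\<Sum>(x,y)\<leftarrow>l. F x y) = (\<Sum>(x,y)\<leftarrow>l. c * F x y)"
  by (induction l) (auto simp: distrib_left)
lemma lm_r: "(\<Sum>(x,y)\<leftarrow>l. F x y) * (c::'a::ring) = (\<Sum>(x,y)\<leftarrow>l. F x y * c)"
  by (induction l) (auto simp: distrib_right)
lemma swap2: "(\<Sum>(x1,x2)\<leftarrow>xs. \<Sum>(y1,y2)\<leftarrow>ys. F x1 x2 y1 y2) = (\<Sum>(y1,y2)\<leftarrow>ys. \<Sum>(x1,x2)\<leftarrow>xs. F x1 x2 y1 y2 :: 'a::comm_monoid_add)"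
  by (induction xs) (simp_all add: split_def sum_list_addf)

locale hopf =
  fixes sc :: "'k::field \<Rightarrow> 'h::ring_1 \<Rightarrow> 'h" and D :: "'h \<Rightarrow> ('h \<times> 'h) list"
    and eps :: "'h \<Rightarrow> 'k" and S :: "'h \<Rightarrow> 'h"
  assumes H: "hopf_algebra sc D eps S"
begin

lemma kalg: "k_algebra sc" using H by (simp add: hopf_algebra_def)
lemma VS: "vector_space sc" using kalg by (simp add: k_algebra_def)

sublocale V: vector_space sc by (rule VS)

lemma scm1: "sc c (a * b) = sc c a * b" using kalg unfolding k_algebra_def by blast
lemma scm2: "sc c (a * b) = a * sc c b" using kalg unfolding k_algebra_def by blast

lemma fadd: "functional sc \<phi> \<Longrightarrow> \<phi> (a+b) = \<phi> a + \<phi> b"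
  using functional_iff[OF VS] by blast
lemma fscale: "functional sc \<phi> \<Longrightarrow> \<phi> (sc c a) = c * \<phi> a"
  using functional_iff[OF VS] by blast
lemma fzero: "functional sc \<phi> \<Longrightarrow> \<phi> 0 = 0"
  using fscale[of \<phi> 0 0] by simp
lemma fdiff: "functional sc \<phi> \<Longrightarrow> \<phi> (a-b) = \<phi> a - \<phi> b"
  using fadd[of \<phi> "a-b" b] by simp
lemma fsum: "functional sc \<phi> \<Longrightarrow> \<phi> (sum g A) = (\<Sum>x\<in>A. \<phi> (g x))"
  by (induction A rule: infinite_finite_induct) (auto simp: fzero fadd)
lemma fsuml: "functional sc \<phi> \<Longrightarrow> \<phi> (\<Sum>(u,v)\<leftarrow>l. g u v) = (\<Sum>(u,v)\<leftarrow>l. \<phi> (g u v))"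
  by (induction l) (auto simp: fzero fadd)

lemma linI: "(\<And>a b. f (a+b) = f a + f b) \<Longrightarrow> (\<And>c a. f (sc c a) = sc c (f a)) \<Longrightarrow> lin sc f"
  by (simp add: lin_def)
lemma ladd: "lin sc f \<Longrightarrow> f (a+b) = f a + f b" by (simp add: lin_def)
lemma lscale: "lin sc f \<Longrightarrow> f (sc c a) = sc c (f a)" by (simp add: lin_def)
lemma lzero: "lin sc f \<Longrightarrow> f 0 = 0"
  using lscale[of f 0 0] by simp
lemma lsum: "lin sc f \<Longrightarrow> f (sum g A) = (\<Sum>x\<in>A. f (g x))"
  by (induction A rule: infinite_finite_induct) (auto simp: lzero ladd)
lemma lsuml: "lin sc f \<Longrightarrow> f (\<Sum>(u,v)\<leftarrow>l. g u v) = (\<Sum>(u,v)\<leftarrow>l. f (g u v))"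
  by (induction l) (auto simp: lzero ladd)

lemma enough:
  assumes "finite X"
  shows "\<exists>E \<psi>. finite E \<and> (\<forall>e. functional sc (\<psi> e)) \<and> (\<forall>v\<in>X. v = (\<Sum>e\<in>E. sc (\<psi> e v) e))"
proof -
  define B where "B = V.extend_basis {}"
  have iB: "V.independent B" and sB: "V.span B = UNIV"
    unfolding B_def using V.independent_extend_basis[of "{}"] V.span_extend_basis[of "{}"] V.independent_empty by auto
  define \<psi> where "\<psi> e v = V.representation B v e" for e v
  have fn: "functional sc (\<psi> e)" for e
    unfolding functional_def \<psi>_def by (rule V.linear_representation[OF iB sB])
  define E where "E = (\<Union>v\<in>X. {b. V.representation B v b \<noteq> 0})"
  have fE: "finite E" unfolding E_def using assms V.finite_representation by auto
  have "v = (\<Sum>e\<in>E. sc (\<psi> e v) e)" if "v \<in> X" for v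
  proof -
    have "(\<Sum>e\<in>E. sc (\<psi> e v) e) = (\<Sum>b | V.representation B v b \<noteq> 0. sc (V.representation B v b) b)"
      unfolding \<psi>_def using fE that by (intro sum.mono_neutral_cong_right) (auto simp: E_def)
    also have "\<dots> = v" using V.sum_nonzero_representation_eq[OF iB] sB by auto
    finally show ?thesis by simp
  qed
  then show ?thesis using fE fn by blast
qed

lemma separate:
  assumes "\<And>\<phi>. functional sc \<phi> \<Longrightarrow> \<phi> a = \<phi> b"
  shows "a = b"
proof -
  obtain E \<psi> where E: "finite E" "\<And>e. functional sc (\<psi> e)" "a - b = (\<Sum>e\<in>E. sc (\<psi> e (a-b)) e)"
    using enough[of "{a-b}"] by auto
  have "\<psi> e (a - b) = 0" for e using assms[OF E(2)[of e]] fdiff[OF E(2)] by simp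
  then have "a - b = 0" using E(3) by simp
  then show ?thesis by simp
qed


lemma G_aux:
  assumes F: "bilin sc F" and fn: "\<And>e. functional sc (\<psi> e)"
    and rep: "\<forall>v\<in>X. v = (\<Sum>e\<in>E. sc (\<psi> e v) e)" and fE: "finite E"
  shows "snd ` set l \<subseteq> X \<Longrightarrow> (\<Sum>(u,v)\<leftarrow>l. F u v) = (\<Sum>e\<in>E. F (\<Sum>(u,v)\<leftarrow>l. sc (\<psi> e v) u) e)"
proof (induction l)
  case Nil
  have "F 0 e = 0" for e using F lzero unfolding bilin_def by blast
  then show ?case by simp
next
  case (Cons p l)
  obtain u v where p: "p = (u,v)" by force
  have vX: "v \<in> X" using Cons.prems p by auto
  have l1: "lin sc (F u)" and l2: "\<And>w. lin sc (\<lambda>u. F u w)" using F unfolding bilin_def by auto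
  have "F u v = F u (\<Sum>e\<in>E. sc (\<psi> e v) e)" using rep vX by metis
  also have "\<dots> = (\<Sum>e\<in>E. F (sc (\<psi> e v) u) e)"
    unfolding lsum[OF l1, of "\<lambda>e. sc (\<psi> e v) e"] lscale[OF l1] lscale[OF l2] ..
  finally have 1: "F u v = (\<Sum>e\<in>E. F (sc (\<psi> e v) u) e)" .
  have "(\<Sum>(u,v)\<leftarrow>p#l. F u v) = F u v + (\<Sum>e\<in>E. F (\<Sum>(u,v)\<leftarrow>l. sc (\<psi> e v) u) e)"
    using Cons p by auto
  also have "\<dots> = (\<Sum>e\<in>E. F (sc (\<psi> e v) u + (\<Sum>(u,v)\<leftarrow>l. sc (\<psi> e v) u)) e)"
    unfolding 1 ladd[OF l2] sum.distrib ..
  finally show ?case using p by simp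
qed

lemma transfer2:
  assumes T: "tens_eq sc l m" and F: "bilin sc F"
  shows "(\<Sum>(u,v)\<leftarrow>l. F u v) = (\<Sum>(u,v)\<leftarrow>m. F u v)"
proof -
  obtain E \<psi> where E: "finite E" "\<And>e. functional sc (\<psi> e)"
     "\<forall>v\<in>snd ` set l \<union> snd ` set m. v = (\<Sum>e\<in>E. sc (\<psi> e v) e)"
    using enough[of "snd ` set l \<union> snd ` set m"] by auto
  have inner: "(\<Sum>(u,v)\<leftarrow>l. sc (\<psi> e v) u) = (\<Sum>(u,v)\<leftarrow>m. sc (\<psi> e v) u)" for e
  proof (rule separate)
    fix \<phi> assume f: "functional sc \<phi>"
    have "\<phi> (\<Sum>(u,v)\<leftarrow>l. sc (\<psi> e v) u) = tens_eval \<phi> (\<psi> e) l"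
      unfolding fsuml[OF f] tens_eval_def by (simp add: fscale[OF f] split_def mult.commute)
    also have "\<dots> = tens_eval \<phi> (\<psi> e) m" using T f E(2) unfolding tens_eq_def by blast
    also have "\<dots> = \<phi> (\<Sum>(u,v)\<leftarrow>m. sc (\<psi> e v) u)"
      unfolding fsuml[OF f] tens_eval_def by (simp add: fscale[OF f] split_def mult.commute)
    finally show "\<phi> (\<Sum>(u,v)\<leftarrow>l. sc (\<psi> e v) u) = \<phi> (\<Sum>(u,v)\<leftarrow>m. sc (\<psi> e v) u)" .
  qed
  show ?thesis
    using G_aux[OF F E(2) E(3) E(1), of l] G_aux[OF F E(2) E(3) E(1), of m] inner by simp
qed

lemma G3_aux:
  assumes T: "tril sc T" and fn: "\<And>e. functional sc (\<psi> e)"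
    and rep: "\<forall>v\<in>X. v = (\<Sum>e\<in>E. sc (\<psi> e v) e)" and fE: "finite E"
  shows "(snd o snd) ` set l \<subseteq> X \<Longrightarrow> (\<Sum>(a,b,c)\<leftarrow>l. T a b c) = (\<Sum>e\<in>E. \<Sum>(a,b,c)\<leftarrow>l. T a (sc (\<psi> e c) b) e)"
proof (induction l)
  case Nil
  then show ?case by simp
next
  case (Cons p l)
  obtain a b c where p: "p = (a,b,c)" by (cases p) auto
  have vX: "c \<in> X" using Cons.prems p by auto
  have l1: "lin sc (T a b)" and l2: "\<And>w. lin sc (\<lambda>u. T a u w)" using T unfolding tril_def by auto
  have "T a b c = T a b (\<Sum>e\<in>E. sc (\<psi> e c) e)" using rep vX by metis
  also have "\<dots> = (\<Sum>e\<in>E. T a (sc (\<psi> e c) b) e)"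
    unfolding lsum[OF l1, of "\<lambda>e. sc (\<psi> e c) e"] lscale[OF l1] lscale[OF l2] ..
  finally have 1: "T a b c = (\<Sum>e\<in>E. T a (sc (\<psi> e c) b) e)" .
  show ?case using Cons p by (simp add: 1 sum.distrib)
qed

lemma transfer3:
  assumes H3: "\<And>\<phi> \<psi> \<chi>. functional sc \<phi> \<Longrightarrow> functional sc \<psi> \<Longrightarrow> functional sc \<chi> \<Longrightarrow>
      (\<Sum>(a,b,c)\<leftarrow>l. \<phi> a * \<psi> b * \<chi> c) = (\<Sum>(a,b,c)\<leftarrow>m. \<phi> a * \<psi> b * \<chi> c)"
    and T: "tril sc T"
  shows "(\<Sum>(a,b,c)\<leftarrow>l. T a b c) = (\<Sum>(a,b,c)\<leftarrow>m. T a b c)"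
proof -
  obtain E \<psi> where E: "finite E" "\<And>e. functional sc (\<psi> e)"
     "\<forall>v\<in>(snd o snd) ` set l \<union> (snd o snd) ` set m. v = (\<Sum>e\<in>E. sc (\<psi> e v) e)"
    using enough[of "(snd o snd) ` set l \<union> (snd o snd) ` set m"] by auto
  have inner: "(\<Sum>(a,b,c)\<leftarrow>l. T a (sc (\<psi> e c) b) e) = (\<Sum>(a,b,c)\<leftarrow>m. T a (sc (\<psi> e c) b) e)" for e
  proof -
    let ?f = "\<lambda>(a,b,c). (a, sc (\<psi> e c) b)"
    have eq: "(\<Sum>(a,b,c)\<leftarrow>k. T a (sc (\<psi> e c) b) e) = (\<Sum>(u,v)\<leftarrow>map ?f k. T u v e)" for k
      by (induction k) auto
    have B: "bilin sc (\<lambda>u v. T u v e)" using T unfolding tril_def bilin_def by auto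
    have te: "tens_eq sc (map ?f l) (map ?f m)"
      unfolding tens_eq_def
    proof (intro allI impI)
      fix \<phi> \<chi> assume f: "functional sc \<phi> \<and> functional sc \<chi>"
      have ev: "tens_eval \<phi> \<chi> (map ?f k) = (\<Sum>(a,b,c)\<leftarrow>k. \<phi> a * \<chi> b * \<psi> e c)" for k
        unfolding tens_eval_def by (induction k) (auto simp: fscale f)
      show "tens_eval \<phi> \<chi> (map ?f l) = tens_eval \<phi> \<chi> (map ?f m)"
        unfolding ev using H3 f E(2) by blast
    qed
    show ?thesis unfolding eq using transfer2[OF te B] .
  qed
  show ?thesis
    using G3_aux[OF T E(2) E(3) E(1), of l] G3_aux[OF T E(2) E(3) E(1), of m] inner by simp
qed

definition L1 where "L1 h = concat (map (\<lambda>(a,b). map (\<lambda>(c,d). (c,d,b)) (D a)) (D h))"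
definition L2 where "L2 h = concat (map (\<lambda>(a,b). map (\<lambda>(c,d). (a,c,d)) (D b)) (D h))"

lemma L1_sum: "(\<Sum>(x,y,z)\<leftarrow>L1 h. T x y z) = (\<Sum>(a,b)\<leftarrow>D h. \<Sum>(c,d)\<leftarrow>D a. T c d b)"
  unfolding L1_def sum_list_concat_map by (simp add: split_def o_def)
lemma L2_sum: "(\<Sum>(x,y,z)\<leftarrow>L2 h. T x y z) = (\<Sum>(a,b)\<leftarrow>D h. \<Sum>(c,d)\<leftarrow>D b. T a c d)"
  unfolding L2_def sum_list_concat_map by (simp add: split_def o_def)

lemma coassoc3:
  assumes "tril sc T"
  shows "(\<Sum>(a,b)\<leftarrow>D h. \<Sum>(c,d)\<leftarrow>D a. T c d b) = (\<Sum>(a,b)\<leftarrow>D h. \<Sum>(c,d)\<leftarrow>D b. T a c d)"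
proof -
  have "(\<Sum>(x,y,z)\<leftarrow>L1 h. T x y z) = (\<Sum>(x,y,z)\<leftarrow>L2 h. T x y z)"
  proof (rule transfer3[OF _ assms])
    fix \<phi> \<psi> \<chi> assume "functional sc \<phi>" "functional sc \<psi>" "functional sc \<chi>"
    then show "(\<Sum>(a,b,c)\<leftarrow>L1 h. \<phi> a * \<psi> b * \<chi> c) = (\<Sum>(a,b,c)\<leftarrow>L2 h. \<phi> a * \<psi> b * \<chi> c)"
      unfolding L1_sum L2_sum using H unfolding hopf_algebra_def by blast
  qed
  then show ?thesis unfolding L1_sum L2_sum .
qed

lemma fun_eps: "functional sc eps" using H unfolding hopf_algebra_def by blast
lemma lin_S: "lin sc S"
  using H unfolding hopf_algebra_def lin_def module_hom_iff by blast

lemma lin_id: "lin sc (\<lambda>x. x)" by (simp add: lin_def)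
lemma lin_mr: "lin sc f \<Longrightarrow> lin sc (\<lambda>x. f x * c)"
  by (simp add: lin_def algebra_simps scm1)
lemma lin_ml: "lin sc f \<Longrightarrow> lin sc (\<lambda>x. c * f x)"
  by (simp add: lin_def algebra_simps scm2)
lemma lin_comp: "lin sc f \<Longrightarrow> lin sc g \<Longrightarrow> lin sc (\<lambda>x. f (g x))"
  by (simp add: lin_def)
lemma lin_sc: "lin sc f \<Longrightarrow> lin sc (\<lambda>x. sc k (f x))"
  unfolding lin_def by (simp add: V.scale_right_distrib)
lemma lin_fun: "functional sc \<phi> \<Longrightarrow> lin sc (\<lambda>x. sc (\<phi> x) c)"
  by (simp add: lin_def fadd fscale V.scale_left_distrib)
lemma lin_add: "lin sc f \<Longrightarrow> lin sc g \<Longrightarrow> lin sc (\<lambda>x. f x + g x)"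
  by (simp add: lin_def add_ac V.scale_right_distrib)
lemma lin_suml: "(\<And>u v. lin sc (\<lambda>x. G x u v)) \<Longrightarrow> lin sc (\<lambda>x. \<Sum>(u,v)\<leftarrow>l. G x u v)"
proof (induction l)
  case Nil then show ?case by (simp add: lin_def)
next
  case (Cons p l)
  obtain u v where p: "p = (u,v)" by force
  have "lin sc (\<lambda>x. G x u v)" "lin sc (\<lambda>x. \<Sum>(u,v)\<leftarrow>l. G x u v)" using Cons by auto
  then show ?case using p by (simp add: lin_add)
qed

lemma sc_suml: "sc k (\<Sum>(x,y)\<leftarrow>l. F x y) = (\<Sum>(x,y)\<leftarrow>l. sc k (F x y))"
  by (induction l) (auto simp: V.scale_right_distrib)

lemma tens_eq_sym: "tens_eq sc l m \<Longrightarrow> tens_eq sc m l" by (simp add: tens_eq_def)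
lemma tens_eq_trans: "tens_eq sc l m \<Longrightarrow> tens_eq sc m n \<Longrightarrow> tens_eq sc l n" by (simp add: tens_eq_def)

lemma sum_tm: "(\<Sum>(u,v)\<leftarrow>tens_mult l m. F u v) = (\<Sum>(a1,b1)\<leftarrow>l. \<Sum>(a2,b2)\<leftarrow>m. F (a1*a2) (b1*b2))"
proof (induction l)
  case Nil then show ?case by (simp add: tens_mult_def)
next
  case (Cons p l)
  obtain a b where p: "p = (a,b)" by force
  have "tens_mult (p#l) m = map (\<lambda>(a2,b2). (a*a2, b*b2)) m @ tens_mult l m"
    using p by (simp add: tens_mult_def)
  moreover have "(\<Sum>(u,v)\<leftarrow>map (\<lambda>(a2,b2). (a*a2, b*b2)) m. F u v) = (\<Sum>(a2,b2)\<leftarrow>m. F (a*a2) (b*b2))"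
    by (induction m) auto
  ultimately show ?case using Cons p by simp
qed

lemma mult_transfer:
  assumes "bilin sc F"
  shows "(\<Sum>(u,v)\<leftarrow>D (a*b). F u v) = (\<Sum>(a1,a2)\<leftarrow>D a. \<Sum>(b1,b2)\<leftarrow>D b. F (a1*b1) (a2*b2))"
proof -
  have "tens_eq sc (D (a*b)) (tens_mult (D a) (D b))" using H unfolding hopf_algebra_def by blast
  from transfer2[OF this assms] show ?thesis
    unfolding sum_tm .
qed

definition conv where
  "conv f g a b = (\<Sum>(a1,a2)\<leftarrow>D a. \<Sum>(b1,b2)\<leftarrow>D b. f a1 b1 * g a2 b2)"

lemma bl1: "bilin sc F \<Longrightarrow> lin sc (F u)" by (simp add: bilin_def)
lemma bl2: "bilin sc F \<Longrightarrow> lin sc (\<lambda>u. F u v)" by (simp add: bilin_def)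

lemma conv_assoc:
  assumes f: "bilin sc f" and g: "bilin sc g" and h: "bilin sc h"
  shows "conv f (conv g h) a b = conv (conv f g) h a b"
proof -
  define Ta where "Ta p q r = (\<Sum>(b1,b2)\<leftarrow>D b. \<Sum>(b3,b4)\<leftarrow>D b2. f p b1 * (g q b3 * h r b4))" for p q r
  have i1: "(\<Sum>(b1,b2)\<leftarrow>D b. f a1 b1 * conv g h a2 b2) = (\<Sum>(a3,a4)\<leftarrow>D a2. Ta a1 a3 a4)" for a1 a2
  proof -
    have "(\<Sum>(b1,b2)\<leftarrow>D b. f a1 b1 * conv g h a2 b2) =
       (\<Sum>(b1,b2)\<leftarrow>D b. \<Sum>(a3,a4)\<leftarrow>D a2. \<Sum>(b3,b4)\<leftarrow>D b2. f a1 b1 * (g a3 b3 * h a4 b4))"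
      by (simp add: conv_def lm_l)
    also have "\<dots> = (\<Sum>(a3,a4)\<leftarrow>D a2. \<Sum>(b1,b2)\<leftarrow>D b. \<Sum>(b3,b4)\<leftarrow>D b2. f a1 b1 * (g a3 b3 * h a4 b4))"
      by (rule swap2)
    finally show ?thesis unfolding Ta_def .
  qed
  have s1: "conv f (conv g h) a b = (\<Sum>(a1,a2)\<leftarrow>D a. \<Sum>(a3,a4)\<leftarrow>D a2. Ta a1 a3 a4)"
    unfolding conv_def[of f] i1 ..
  have trTa: "tril sc Ta"
    unfolding tril_def Ta_def
    by (intro conjI allI lin_suml lin_mr lin_ml bl1[OF f] bl1[OF g] bl1[OF h] bl2[OF f] bl2[OF g] bl2[OF h])
  have s2: "(\<Sum>(a1,a2)\<leftarrow>D a. \<Sum>(a3,a4)\<leftarrow>D a2. Ta a1 a3 a4) = (\<Sum>(u,a4)\<leftarrow>D a. \<Sum>(a1,a3)\<leftarrow>D u. Ta a1 a3 a4)"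
    using coassoc3[OF trTa, of a] by simp
  have s3: "Ta a1 a3 a4 = (\<Sum>(v,b4)\<leftarrow>D b. \<Sum>(b1,b3)\<leftarrow>D v. f a1 b1 * (g a3 b3 * h a4 b4))" for a1 a3 a4
  proof -
    have tR: "tril sc (\<lambda>x y z. f a1 x * (g a3 y * h a4 z))"
      unfolding tril_def
      by (intro conjI allI lin_suml lin_mr lin_ml bl1[OF f] bl1[OF g] bl1[OF h] bl2[OF f] bl2[OF g] bl2[OF h])
    show ?thesis unfolding Ta_def using coassoc3[OF tR, of b] by simp
  qed
  have i4: "(\<Sum>(v,b4)\<leftarrow>D b. conv f g u v * h a4 b4) =
      (\<Sum>(a1,a3)\<leftarrow>D u. \<Sum>(v,b4)\<leftarrow>D b. \<Sum>(b1,b3)\<leftarrow>D v. f a1 b1 * (g a3 b3 * h a4 b4))" for u a4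
  proof -
    have "(\<Sum>(v,b4)\<leftarrow>D b. conv f g u v * h a4 b4) =
       (\<Sum>(v,b4)\<leftarrow>D b. \<Sum>(a1,a3)\<leftarrow>D u. \<Sum>(b1,b3)\<leftarrow>D v. f a1 b1 * (g a3 b3 * h a4 b4))"
      by (simp add: conv_def lm_r mult.assoc)
    also have "\<dots> = (\<Sum>(a1,a3)\<leftarrow>D u. \<Sum>(v,b4)\<leftarrow>D b. \<Sum>(b1,b3)\<leftarrow>D v. f a1 b1 * (g a3 b3 * h a4 b4))"
      by (rule swap2)
    finally show ?thesis .
  qed
  have s4: "conv (conv f g) h a b = (\<Sum>(u,a4)\<leftarrow>D a. \<Sum>(a1,a3)\<leftarrow>D u. \<Sum>(v,b4)\<leftarrow>D b. \<Sum>(b1,b3)\<leftarrow>D v. f a1 b1 * (g a3 b3 * h a4 b4))"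
    unfolding conv_def[of "conv f g"] i4 ..
  show ?thesis unfolding s1 s2 s4 s3 ..
qed

lemma cu1: "(\<Sum>(a,b)\<leftarrow>D h. sc (eps a) b) = h" using H unfolding hopf_algebra_def by blast
lemma cu2: "(\<Sum>(a,b)\<leftarrow>D h. sc (eps b) a) = h" using H unfolding hopf_algebra_def by blast
lemma ap1: "(\<Sum>(a,b)\<leftarrow>D h. S a * b) = sc (eps h) 1" using H unfolding hopf_algebra_def by blast
lemma ap2: "(\<Sum>(a,b)\<leftarrow>D h. a * S b) = sc (eps h) 1" using H unfolding hopf_algebra_def by blast
lemma eps_mult: "eps (a*b) = eps a * eps b" using H unfolding hopf_algebra_def by blast

lemma S_antimult: "S (a*b) = S b * S a"
proof -
  define fS where "fS x y = S (x*y)" for x y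
  define mm where "mm x y = x*y" for x y :: 'h
  define gS where "gS x y = S y * S x" for x y
  define e where "e x y = sc (eps x * eps y) (1::'h)" for x y
  have bf: "bilin sc fS" unfolding bilin_def fS_def
    by (intro conjI allI lin_comp[OF lin_S] lin_ml lin_mr lin_id)
  have bm: "bilin sc mm" unfolding bilin_def mm_def
    by (intro conjI allI lin_ml lin_mr lin_id)
  have bg: "bilin sc gS" unfolding bilin_def gS_def
    by (intro conjI allI lin_ml lin_mr lin_S)
  have i: "conv fS mm = e"
  proof (intro ext)
    fix x y
    have bb: "bilin sc (\<lambda>u v. S u * v)" unfolding bilin_def
      by (intro conjI allI lin_ml lin_mr lin_id lin_S)
    show "conv fS mm x y = e x y"
      unfolding conv_def fS_def mm_def e_def mult_transfer[OF bb, symmetric] ap1 eps_mult ..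
  qed
  have ii: "conv mm gS = e"
  proof (intro ext)
    fix x y
    have in1: "(\<Sum>(b1,b2)\<leftarrow>D y. a1*b1*(S b2 * S a2)) = sc (eps y) (a1 * S a2)" for a1 a2
    proof -
      have "(\<Sum>(b1,b2)\<leftarrow>D y. a1*b1*(S b2 * S a2)) = a1 * (\<Sum>(b1,b2)\<leftarrow>D y. b1 * S b2) * S a2"
        by (simp add: lm_l lm_r mult.assoc)
      also have "\<dots> = sc (eps y) (a1 * S a2)" unfolding ap2 by (simp flip: scm1 scm2)
      finally show ?thesis .
    qed
    show "conv mm gS x y = e x y"
      unfolding conv_def mm_def gS_def e_def in1
      by (simp flip: sc_suml add: ap2 mult.commute)
  qed
  have iii: "conv fS e a b = fS a b"
  proof -
    have "fS a b = S ((\<Sum>(a1,a2)\<leftarrow>D a. sc (eps a2) a1) * (\<Sum>(b1,b2)\<leftarrow>D b. sc (eps b2) b1))"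
      unfolding fS_def cu2 ..
    also have "\<dots> = S (\<Sum>(a1,a2)\<leftarrow>D a. \<Sum>(b1,b2)\<leftarrow>D b. sc (eps a2) a1 * sc (eps b2) b1)"
      unfolding lm_r unfolding lm_l ..
    also have "\<dots> = (\<Sum>(a1,a2)\<leftarrow>D a. \<Sum>(b1,b2)\<leftarrow>D b. S (sc (eps a2) a1 * sc (eps b2) b1))"
      by (simp add: lsuml[OF lin_S])
    also have "\<dots> = conv fS e a b"
      unfolding conv_def fS_def e_def
      by (simp add: lscale[OF lin_S] mult.commute flip: scm1 scm2)
    finally show ?thesis by simp
  qed
  have iv: "conv e gS a b = gS a b"
  proof -
    have "gS a b = S (\<Sum>(b1,b2)\<leftarrow>D b. sc (eps b1) b2) * S (\<Sum>(a1,a2)\<leftarrow>D a. sc (eps a1) a2)"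
      unfolding gS_def cu1 ..
    also have "\<dots> = (\<Sum>(b1,b2)\<leftarrow>D b. \<Sum>(a1,a2)\<leftarrow>D a. S (sc (eps b1) b2) * S (sc (eps a1) a2))"
      unfolding lsuml[OF lin_S] unfolding lm_r unfolding lm_l ..
    also have "\<dots> = (\<Sum>(a1,a2)\<leftarrow>D a. \<Sum>(b1,b2)\<leftarrow>D b. S (sc (eps b1) b2) * S (sc (eps a1) a2))"
      by (rule swap2)
    also have "\<dots> = conv e gS a b"
      unfolding conv_def e_def gS_def
      by (simp add: lscale[OF lin_S] flip: scm1 scm2)
    finally show ?thesis by simp
  qed
  have "fS a b = conv fS (conv mm gS) a b" using iii ii by simp
  also have "\<dots> = conv (conv fS mm) gS a b" by (rule conv_assoc[OF bf bm bg])
  also have "\<dots> = gS a b" using iv i by simp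
  finally show ?thesis unfolding fS_def gS_def .
qed

lemma S_one: "S 1 = 1"
proof -
  have t: "tens_eq sc (D 1) [(1,1)]" using H unfolding hopf_algebra_def by blast
  have bb: "bilin sc (\<lambda>u v. S u * v)" unfolding bilin_def
    by (intro conjI allI lin_ml lin_mr lin_id lin_S)
  have "(\<Sum>(u,v)\<leftarrow>D 1. S u * v) = (\<Sum>(u,v)\<leftarrow>[(1,1)]. S u * v)" by (rule transfer2[OF t bb])
  moreover have "eps 1 = 1" using H unfolding hopf_algebra_def by blast
  ultimately show ?thesis using ap1[of 1] by simp
qed

lemma tens_eval_append: "tens_eval \<phi> \<psi> (l @ m) = tens_eval \<phi> \<psi> l + tens_eval \<phi> \<psi> m"
  by (simp add: tens_eval_def)

lemma D_zero: "tens_eq sc (D 0) []"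
proof -
  have "tens_eq sc (D (0+0)) (D 0 @ D 0)" using H unfolding hopf_algebra_def by blast
  then have "tens_eval \<phi> \<psi> (D 0) = tens_eval \<phi> \<psi> (D 0) + tens_eval \<phi> \<psi> (D 0)"
    if "functional sc \<phi>" "functional sc \<psi>" for \<phi> \<psi>
    using that unfolding tens_eq_def by (simp add: tens_eval_append)
  then have "tens_eval \<phi> \<psi> (D 0) = 0" if "functional sc \<phi>" "functional sc \<psi>" for \<phi> \<psi>
    using that by (metis add_cancel_right_right)
  then show ?thesis unfolding tens_eq_def by (simp add: tens_eval_def)
qed

lemma tens_eq_append: "tens_eq sc l l' \<Longrightarrow> tens_eq sc m m' \<Longrightarrow> tens_eq sc (l @ m) (l' @ m')"
  by (simp add: tens_eq_def tens_eval_append)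

lemma tens_eval_map: "functional sc \<phi> \<Longrightarrow> tens_eval \<phi> \<psi> (map (\<lambda>(u,v). (sc c u, v)) l) = c * tens_eval \<phi> \<psi> l"
  unfolding tens_eval_def by (induction l) (auto simp: fscale algebra_simps)

lemma tens_eq_map: "tens_eq sc l l' \<Longrightarrow> tens_eq sc (map (\<lambda>(u,v). (sc c u, v)) l) (map (\<lambda>(u,v). (sc c u, v)) l')"
  unfolding tens_eq_def by (simp add: tens_eval_map)

lemma fun_mr: "functional sc \<phi> \<Longrightarrow> functional sc (\<lambda>z. \<phi> (z * c))"
  using functional_iff[OF VS] by (simp add: algebra_simps flip: scm1)
lemma fun_ml: "functional sc \<phi> \<Longrightarrow> functional sc (\<lambda>z. \<phi> (c * z))"
  using functional_iff[OF VS] by (simp add: algebra_simps flip: scm2)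

lemma tens_eval_tm1: "tens_eval \<phi> \<psi> (tens_mult l m) = (\<Sum>(a2,b2)\<leftarrow>m. tens_eval (\<lambda>z. \<phi> (z*a2)) (\<lambda>z. \<psi> (z*b2)) l)"
  unfolding tens_eval_def sum_tm by (rule swap2)
lemma tens_eval_tm2: "tens_eval \<phi> \<psi> (tens_mult l m) = (\<Sum>(a1,b1)\<leftarrow>l. tens_eval (\<lambda>z. \<phi> (a1*z)) (\<lambda>z. \<psi> (b1*z)) m)"
  unfolding tens_eval_def sum_tm ..

lemma tens_eq_tm: "tens_eq sc l l' \<Longrightarrow> tens_eq sc m m' \<Longrightarrow> tens_eq sc (tens_mult l m) (tens_mult l' m')"
proof -
  assume a: "tens_eq sc l l'" and b: "tens_eq sc m m'"
  have 1: "tens_eq sc (tens_mult l m) (tens_mult l' m)"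
    unfolding tens_eq_def tens_eval_tm1 using a fun_mr unfolding tens_eq_def by simp
  have 2: "tens_eq sc (tens_mult l' m) (tens_mult l' m')"
    unfolding tens_eq_def tens_eval_tm2 using b fun_ml unfolding tens_eq_def by simp
  show ?thesis using tens_eq_trans[OF 1 2] .
qed

lemma subalgI:
  assumes "0 \<in> A" "\<And>a b. a \<in> A \<Longrightarrow> b \<in> A \<Longrightarrow> a + b \<in> A" "\<And>c a. a \<in> A \<Longrightarrow> sc c a \<in> A"
    "1 \<in> A" "\<And>a b. a \<in> A \<Longrightarrow> b \<in> A \<Longrightarrow> a * b \<in> A"
  shows "subalgebra sc A"
  unfolding subalgebra_def using assms by (auto simp: V.subspace_def)

lemma subalgD:
  assumes "subalgebra sc A"
  shows "0 \<in> A" "\<And>a b. a \<in> A \<Longrightarrow> b \<in> A \<Longrightarrow> a + b \<in> A" "\<And>c a. a \<in> A \<Longrightarrow> sc c a \<in> A"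
    "1 \<in> A" "\<And>a b. a \<in> A \<Longrightarrow> b \<in> A \<Longrightarrow> a * b \<in> A"
  using assms unfolding subalgebra_def by (auto simp: V.subspace_def)

lemma gen_subalg: "subalgebra sc (alg_gen sc X)"
  by (rule subalgI) (auto simp: alg_gen_def dest: subalgD)

lemma gen_incl: "X \<subseteq> alg_gen sc X" by (auto simp: alg_gen_def)
lemma gen_least: "subalgebra sc A \<Longrightarrow> X \<subseteq> A \<Longrightarrow> alg_gen sc X \<subseteq> A"
  by (auto simp: alg_gen_def)
lemma gen_mono: "X \<subseteq> Y \<Longrightarrow> alg_gen sc X \<subseteq> alg_gen sc Y"
  using gen_least[OF gen_subalg, of X Y] gen_incl[of Y] by blast

lemma gen_B: "alg_gen sc (insert x (alg_gen sc X)) = alg_gen sc (insert x X)"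
proof
  show "alg_gen sc (insert x X) \<subseteq> alg_gen sc (insert x (alg_gen sc X))"
    using gen_mono gen_incl by (metis insert_mono)
  have "alg_gen sc X \<subseteq> alg_gen sc (insert x X)" by (rule gen_mono) auto
  then show "alg_gen sc (insert x (alg_gen sc X)) \<subseteq> alg_gen sc (insert x X)"
    using gen_incl[of "insert x X"] by (intro gen_least[OF gen_subalg]) auto
qed


lemma main:
  assumes K: "hopf_subalgebra sc D S K" and la: "locally_affine sc D S K"
    and gen: "alg_gen sc (insert x K) = UNIV"
  shows "locally_affine sc D S UNIV"
  unfolding locally_affine_def
proof (intro allI impI)
  fix F :: "'h set" assume "finite F \<and> F \<subseteq> UNIV"
  then have fF: "finite F" by simp
  define P where "P = {h. \<exists>F0. finite F0 \<and> F0 \<subseteq> K \<and> h \<in> alg_gen sc (insert x F0)}"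
  have gs: "\<And>Y. subalgebra sc (alg_gen sc Y)" by (rule gen_subalg)
  have mono2: "h \<in> alg_gen sc (insert x F0) \<Longrightarrow> h \<in> alg_gen sc (insert x (F0 \<union> F1))"
    "h \<in> alg_gen sc (insert x F1) \<Longrightarrow> h \<in> alg_gen sc (insert x (F0 \<union> F1))" for h F0 F1
    using gen_mono[of "insert x F0" "insert x (F0 \<union> F1)"] gen_mono[of "insert x F1" "insert x (F0 \<union> F1)"] by auto
  have "subalgebra sc P"
  proof (rule subalgI)
    show "0 \<in> P" unfolding P_def using subalgD(1)[OF gs] by blast
    show "1 \<in> P" unfolding P_def using subalgD(4)[OF gs] by blast
    show "sc c a \<in> P" if "a \<in> P" for c a using that subalgD(3)[OF gs] unfolding P_def by blast
    show "a + b \<in> P" if ha: "a \<in> P" "b \<in> P" for a b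
    proof -
      obtain F0 F1 where "finite F0" "F0 \<subseteq> K" "a \<in> alg_gen sc (insert x F0)"
        "finite F1" "F1 \<subseteq> K" "b \<in> alg_gen sc (insert x F1)" using ha unfolding P_def by blast
      then have "a \<in> alg_gen sc (insert x (F0 \<union> F1))" "b \<in> alg_gen sc (insert x (F0 \<union> F1))"
        "finite (F0 \<union> F1)" "F0 \<union> F1 \<subseteq> K" using mono2 by auto
      then have "a + b \<in> alg_gen sc (insert x (F0 \<union> F1))" using subalgD(2)[OF gs] by blast
      then show ?thesis unfolding P_def using \<open>finite (F0 \<union> F1)\<close> \<open>F0 \<union> F1 \<subseteq> K\<close> by blast
    qed
    show "a * b \<in> P" if ha: "a \<in> P" "b \<in> P" for a b
    proof -
      obtain F0 F1 where "finite F0" "F0 \<subseteq> K" "a \<in> alg_gen sc (insert x F0)"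
        "finite F1" "F1 \<subseteq> K" "b \<in> alg_gen sc (insert x F1)" using ha unfolding P_def by blast
      then have "a \<in> alg_gen sc (insert x (F0 \<union> F1))" "b \<in> alg_gen sc (insert x (F0 \<union> F1))"
        "finite (F0 \<union> F1)" "F0 \<union> F1 \<subseteq> K" using mono2 by auto
      then have "a * b \<in> alg_gen sc (insert x (F0 \<union> F1))" using subalgD(5)[OF gs] by blast
      then show ?thesis unfolding P_def using \<open>finite (F0 \<union> F1)\<close> \<open>F0 \<union> F1 \<subseteq> K\<close> by blast
    qed
  qed
  moreover have "insert x K \<subseteq> P"
  proof -
    have "x \<in> P" unfolding P_def using gen_incl[of "{x}"] by (intro CollectI exI[of _ "{}"]) auto
    moreover have "k \<in> P" if "k \<in> K" for k
      unfolding P_def using gen_incl[of "{x,k}"] that by (intro CollectI exI[of _ "{k}"]) auto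
    ultimately show ?thesis by auto
  qed
  ultimately have allP: "h \<in> P" for h using gen_least[of P "insert x K"] gen by auto
  define Y where "Y = F \<union> fst ` set (D x) \<union> snd ` set (D x) \<union> {S x}"
  have fY: "finite Y" unfolding Y_def using fF by auto
  define F0 where "F0 y = (SOME G. finite G \<and> G \<subseteq> K \<and> y \<in> alg_gen sc (insert x G))" for y
  have F0: "finite (F0 y) \<and> F0 y \<subseteq> K \<and> y \<in> alg_gen sc (insert x (F0 y))" for y
    unfolding F0_def using allP[of y] unfolding P_def by (intro someI_ex[of "\<lambda>G. finite G \<and> G \<subseteq> K \<and> y \<in> alg_gen sc (insert x G)"]) simp
  define F1 where "F1 = (\<Union>y\<in>Y. F0 y)"
  have "finite F1 \<and> F1 \<subseteq> K" unfolding F1_def using F0 fY by auto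
  then obtain A0 where A0: "hopf_subalgebra sc D S A0" "A0 \<subseteq> K" "F1 \<subseteq> A0" "finitely_generated sc A0"
    using la unfolding locally_affine_def by blast
  obtain X0 where X0: "finite X0" "alg_gen sc X0 = A0" using A0(4) unfolding finitely_generated_def by blast
  define B where "B = alg_gen sc (insert x A0)"
  have sB: "subalgebra sc B" unfolding B_def by (rule gen_subalg)
  have xB: "x \<in> B" and A0B: "A0 \<subseteq> B" unfolding B_def using gen_incl[of "insert x A0"] by auto
  have YB: "Y \<subseteq> B"
  proof
    fix y assume "y \<in> Y"
    then have "F0 y \<subseteq> A0" using A0(3) unfolding F1_def by auto
    then have "alg_gen sc (insert x (F0 y)) \<subseteq> B" unfolding B_def by (intro gen_mono) auto
    then show "y \<in> B" using F0 by auto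
  qed
  have fgB: "finitely_generated sc B"
    unfolding finitely_generated_def B_def using X0 gen_B[of x X0]
    by (intro exI[of _ "insert x X0"]) auto
  have hA0: "subalgebra sc A0" "\<forall>h\<in>A0. \<exists>l. (\<forall>(a,b)\<in>set l. a \<in> A0 \<and> b \<in> A0) \<and> tens_eq sc (D h) l"
    "\<forall>h\<in>A0. S h \<in> A0" using A0(1) unfolding hopf_subalgebra_def by auto
  define P2 where "P2 = {h. \<exists>l. (\<forall>(a,b)\<in>set l. a \<in> B \<and> b \<in> B) \<and> tens_eq sc (D h) l}"
  have "subalgebra sc P2"
  proof (rule subalgI)
    show "0 \<in> P2" unfolding P2_def using D_zero by force
    show "1 \<in> P2" unfolding P2_def using H subalgD(4)[OF sB] unfolding hopf_algebra_def
      by (intro CollectI exI[of _ "[(1,1)]"]) auto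
    show "sc c a \<in> P2" if ha: "a \<in> P2" for c a
    proof -
      obtain l where l: "\<forall>(a,b)\<in>set l. a \<in> B \<and> b \<in> B" "tens_eq sc (D a) l" using ha unfolding P2_def by blast
      have "tens_eq sc (D (sc c a)) (map (\<lambda>(u,v). (sc c u, v)) (D a))" using H unfolding hopf_algebra_def by blast
      then have "tens_eq sc (D (sc c a)) (map (\<lambda>(u,v). (sc c u, v)) l)"
        using tens_eq_trans tens_eq_map[OF l(2)] by blast
      moreover have "\<forall>(a,b)\<in>set (map (\<lambda>(u,v). (sc c u, v)) l). a \<in> B \<and> b \<in> B"
        using l(1) subalgD(3)[OF sB] by auto
      ultimately show ?thesis unfolding P2_def by blast
    qed
    show "a + b \<in> P2" if ha: "a \<in> P2" "b \<in> P2" for a b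
    proof -
      obtain l where l: "\<forall>(a,b)\<in>set l. a \<in> B \<and> b \<in> B" "tens_eq sc (D a) l" using ha unfolding P2_def by blast
      obtain m where m: "\<forall>(a,b)\<in>set m. a \<in> B \<and> b \<in> B" "tens_eq sc (D b) m" using ha unfolding P2_def by blast
      have "tens_eq sc (D (a+b)) (D a @ D b)" using H unfolding hopf_algebra_def by blast
      then have "tens_eq sc (D (a+b)) (l @ m)" using tens_eq_trans tens_eq_append[OF l(2) m(2)] by blast
      then show ?thesis unfolding P2_def using l(1) m(1) by (intro CollectI exI[of _ "l @ m"]) auto
    qed
    show "a * b \<in> P2" if ha: "a \<in> P2" "b \<in> P2" for a b
    proof -
      obtain l where l: "\<forall>(a,b)\<in>set l. a \<in> B \<and> b \<in> B" "tens_eq sc (D a) l" using ha unfolding P2_def by blast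
      obtain m where m: "\<forall>(a,b)\<in>set m. a \<in> B \<and> b \<in> B" "tens_eq sc (D b) m" using ha unfolding P2_def by blast
      have "tens_eq sc (D (a*b)) (tens_mult (D a) (D b))" using H unfolding hopf_algebra_def by blast
      then have "tens_eq sc (D (a*b)) (tens_mult l m)" using tens_eq_trans tens_eq_tm[OF l(2) m(2)] by blast
      moreover have "\<forall>(a,b)\<in>set (tens_mult l m). a \<in> B \<and> b \<in> B"
      proof
        fix p assume "p \<in> set (tens_mult l m)"
        then obtain a1 b1 a2 b2 where pp: "(a1,b1) \<in> set l" "(a2,b2) \<in> set m" "p = (a1*a2, b1*b2)"
          unfolding tens_mult_def by auto
        have "a1 \<in> B" "b1 \<in> B" using l(1) pp(1) by auto
        moreover have "a2 \<in> B" "b2 \<in> B" using m(1) pp(2) by auto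
        ultimately show "case p of (a,b) \<Rightarrow> a \<in> B \<and> b \<in> B" using pp(3) subalgD(5)[OF sB] by auto
      qed
      ultimately show ?thesis unfolding P2_def by blast
    qed
  qed
  moreover have "insert x A0 \<subseteq> P2"
  proof -
    have "x \<in> P2" unfolding P2_def using YB unfolding Y_def
      by (intro CollectI exI[of _ "D x"]) (auto simp: tens_eq_def)
    moreover have "h \<in> P2" if hh: "h \<in> A0" for h
    proof -
      obtain l where "\<forall>(a,b)\<in>set l. a \<in> A0 \<and> b \<in> A0" "tens_eq sc (D h) l" using hA0(2) hh by blast
      then show ?thesis unfolding P2_def using A0B by (intro CollectI exI[of _ l]) auto
    qed
    ultimately show ?thesis by auto
  qed
  ultimately have BP2: "B \<subseteq> P2" unfolding B_def by (rule gen_least)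
  define P3 where "P3 = {h. h \<in> B \<and> S h \<in> B}"
  have "subalgebra sc P3"
  proof (rule subalgI)
    show "0 \<in> P3" unfolding P3_def using subalgD(1)[OF sB] lzero[OF lin_S] by simp
    show "1 \<in> P3" unfolding P3_def using subalgD(4)[OF sB] S_one by simp
    show "sc c a \<in> P3" if "a \<in> P3" for c a
      using that subalgD(3)[OF sB] lscale[OF lin_S] unfolding P3_def by simp
    show "a + b \<in> P3" if "a \<in> P3" "b \<in> P3" for a b
      using that subalgD(2)[OF sB] ladd[OF lin_S] unfolding P3_def by simp
    show "a * b \<in> P3" if "a \<in> P3" "b \<in> P3" for a b
      using that subalgD(5)[OF sB] S_antimult unfolding P3_def by simp
  qed
  moreover have "insert x A0 \<subseteq> P3"
    unfolding P3_def using xB YB A0B hA0(3) unfolding Y_def by auto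
  ultimately have BP3: "B \<subseteq> P3" unfolding B_def by (rule gen_least)
  have "hopf_subalgebra sc D S B"
    unfolding hopf_subalgebra_def using sB BP2 BP3 unfolding P2_def P3_def by auto
  moreover have "F \<subseteq> B" using YB unfolding Y_def by auto
  ultimately show "\<exists>A. hopf_subalgebra sc D S A \<and> A \<subseteq> UNIV \<and> F \<subseteq> A \<and> finitely_generated sc A"
    using fgB by blast
qed

end

theorem proposition3p9:
  fixes sc :: "'k::field_char_0 \<Rightarrow> 'h::ring_1 \<Rightarrow> 'h"
    and \<Delta> :: "'h \<Rightarrow> ('h \<times> 'h) list" and \<epsilon> :: "'h \<Rightarrow> 'k" and S :: "'h \<Rightarrow> 'h"
    and K :: "'h set" and x :: 'h
  assumes "alg_closed_field TYPE('k)"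
    and "hopf_algebra sc \<Delta> \<epsilon> S"
    and "hopf_subalgebra sc \<Delta> S K"
    and "locally_affine sc \<Delta> S K"
    and "alg_gen sc (insert x K) = UNIV"
  shows "locally_affine sc \<Delta> S UNIV"
proof -
  interpret hopf sc \<Delta> \<epsilon> S by (rule hopf.intro) (rule assms(2))
  show ?thesis by (rule main[OF assms(3) assms(4) assms(5)])
qed

end
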